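(* Let $u\in\Omega_0^M$. For every node $v$ of the binary tree $B_\Lambda(u)$ with descendents $v_l,v_r$, one has $\tau(v)\le\tau(v_l)$ and $\tau(v)\le\tau(v_r)$, with at least one of these inequalities strict. In particular $\tau$ is non-decreasing along every path in $B_\Lambda(u)$ starting at the root $u$.
   Context: $\kappa(x,y,z)=-x^2-y^2+z^2+xyz-2$; for $u=(x,y,z)$ set $\bar z(u)=-xy-z$ and $\tau(u)=-z\,\bar z(u)$. $Q_x(x,y,z)=(yz-x,y,z)$, $Q_y(x,y,z)=(x,xz-y,z)$, $Q_z(x,y,z)=(x,y,-xy-z)$ (involutions preserving $\kappa$), and $\Lambda=\langle Q_x,Q_y,Q_z\rangle$. $\Omega_0^M=\{(x,y,z): z<-2,\ xy+z>2\}$. For $u\in\Omega_0^M$ the binary tree $B_\Lambda(u)$ is defined inductively: $u$ is the root; its two descendents are $Q_x(u)$ (left) and $Q_y(u)$ (right); if $v\ne u$ is a node with parent $\hat v$ and $v=\lambda\hat v$ with $\lambda\in\{Q_x,Q_y,Q_z\}$, then the two descendents of $v$ are $\lambda_1v$ and $\lambda_2 v$ where $\{\lambda_1,\lambda_2\}=\{Q_x,Q_y,Q_z\}\setminus\{\lambda\}$. *)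

theory Defs
  imports Complex_Main
begin

type_synonym pt = "real \<times> real \<times> real"

definition kappa :: "pt \<Rightarrow> real" where
  "kappa u = (case u of (x,y,z) \<Rightarrow> - (x^2) - y^2 + z^2 + x*y*z - 2)"

definition zbar :: "pt \<Rightarrow> real" where
  "zbar u = (case u of (x,y,z) \<Rightarrow> -x*y - z)"

definition tau :: "pt \<Rightarrow> real" where
  "tau u = (case u of (x,y,z) \<Rightarrow> - z * zbar u)"

definition Qx :: "pt \<Rightarrow> pt" where
  "Qx u = (case u of (x,y,z) \<Rightarrow> (y*z - x, y, z))"

definition Qy :: "pt \<Rightarrow> pt" where
  "Qy u = (case u of (x,y,z) \<Rightarrow> (x, x*z - y, z))"

definition Qz :: "pt \<Rightarrow> pt" where
  "Qz u = (case u of (x,y,z) \<Rightarrow> (x, y, -x*y - z))"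

definition Omega0M :: "pt set" where
  "Omega0M = {(x,y,z). z < -2 \<and> x*y + z > 2}"

datatype gen = GX | GY | GZ

fun Qg :: "gen \<Rightarrow> pt \<Rightarrow> pt" where
  "Qg GX = Qx" | "Qg GY = Qy" | "Qg GZ = Qz"

text \<open>Nodes of the tree B_Lambda(u): a node is a point v together with the label of the
  involution by which it was obtained from its parent (None for the root).\<close>
inductive tree_node :: "pt \<Rightarrow> pt \<Rightarrow> gen option \<Rightarrow> bool" for u :: pt where
  root: "tree_node u u None"
| root_child: "l \<in> {GX, GY} \<Longrightarrow> tree_node u (Qg l u) (Some l)"
| child: "tree_node u v (Some l) \<Longrightarrow> l' \<noteq> l \<Longrightarrow> tree_node u (Qg l' v) (Some l')"

fun child_gens :: "gen option \<Rightarrow> gen set" where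
  "child_gens None = {GX, GY}"
| "child_gens (Some l) = UNIV - {l}"

end

theory Submission
  imports Defs
begin

lemma l1: fixes x y z :: real assumes p: "x*y*z > 0" and h: "(y*z)^2 \<le> 4*x^2" and z: "z^2 > 4"
  shows "(x*z)^2 > 2*(x*y*z)"
proof (rule ccontr)
  assume "\<not> ?thesis"
  hence a: "(x*z)^2 \<le> 2*(x*y*z)" by simp
  have x0: "x \<noteq> 0" using p by auto
  have e: "(x*y*z)^2 = x^2 * (y*z)^2" by algebra
  have "x^2 * (y*z)^2 \<le> x^2 * (4*x^2)" using h by (simp add: mult_left_mono)
  moreover have "x^2 * (4*x^2) = 4*x^4" by algebra
  ultimately have b: "(x*y*z)^2 \<le> 4*x^4" using e by linarith
  have "((x*z)^2)^2 \<le> (2*(x*y*z))^2" using a by (intro power_mono) auto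
  moreover have "((x*z)^2)^2 = x^4 * (z^2)^2" "(2*(x*y*z))^2 = 4*(x*y*z)^2" by algebra+
  ultimately have "x^4 * (z^2)^2 \<le> 4*(x*y*z)^2" by linarith
  hence c: "x^4 * (z^2)^2 \<le> x^4 * 16" using b by linarith
  have "x^4 > 0" using x0 by simp
  hence "(z^2)^2 \<le> 16" using c by simp
  moreover have "(z^2)^2 > 4^2" using z by (intro power_strict_mono) auto
  ultimately show False by simp
qed

lemma l2: fixes a b :: real assumes "a*b > 0" "a^2 > 2*(a*b)"
  shows "a^2 \<le> 4*(a-b)^2"
  by (smt (verit, best) assms(2) mult_diff_mult power2_diff sum_squares_bound)

definition inv :: "gen option \<Rightarrow> pt \<Rightarrow> bool" where
  "inv lab v = (case v of (x,y,z) \<Rightarrow> z^2 > 4 \<and>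
     (case lab of None \<Rightarrow> x*y*z < 0 | Some GZ \<Rightarrow> x*y*z < 0
      | Some GX \<Rightarrow> x*y*z > 0 \<and> (y*z)^2 \<le> 4*x^2
      | Some GY \<Rightarrow> x*y*z > 0 \<and> (x*z)^2 \<le> 4*y^2))"

lemma dX: "tau (Qx (x,y,z)) = tau (x,y,z) + ((y*z)^2 - 2*(x*y*z))"
  by (simp add: tau_def Qx_def zbar_def power2_eq_square algebra_simps)
lemma dY: "tau (Qy (x,y,z)) = tau (x,y,z) + ((x*z)^2 - 2*(x*y*z))"
  by (simp add: tau_def Qy_def zbar_def power2_eq_square algebra_simps)
lemma dZ: "tau (Qz (x,y,z)) = tau (x,y,z)"
  by (simp add: tau_def Qz_def zbar_def power2_eq_square algebra_simps)

lemma zstep: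
  fixes x y z :: real
  assumes z: "z^2 > 4" and p: "x*y*z < 0"
  shows "inv (Some GX) (Qx (x,y,z)) \<and> tau (x,y,z) < tau (Qx (x,y,z))"
    and "inv (Some GY) (Qy (x,y,z)) \<and> tau (x,y,z) < tau (Qy (x,y,z))"
proof -
  have sq: "(y*z)^2 \<ge> 0" "(x*z)^2 \<ge> 0" "x^2 \<ge> 0" "y^2 \<ge> 0" by auto
  have e1: "(y*z-x)*y*z = (y*z)^2 - x*y*z" by algebra
  have e2: "(y*z-x)^2 = (y*z)^2 - 2*(x*y*z) + x^2" by algebra
  have e3: "x*(x*z-y)*z = (x*z)^2 - x*y*z" by algebra
  have e4: "(x*z-y)^2 = (x*z)^2 - 2*(x*y*z) + y^2" by algebra
  show "inv (Some GX) (Qx (x,y,z)) \<and> tau (x,y,z) < tau (Qx (x,y,z))"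
    unfolding inv_def Qx_def using z p sq e1 e2 dX[of x y z]
    apply (simp add: Qx_def) using sq by linarith
  show "inv (Some GY) (Qy (x,y,z)) \<and> tau (x,y,z) < tau (Qy (x,y,z))"
    unfolding inv_def Qy_def using z p sq e3 e4 dY[of x y z]
    apply (simp add: Qy_def) using sq by linarith
qed

lemma zbar_step:
  fixes x y z :: real
  assumes z: "z^2 > 4" and p: "x*y*z > 0"
  shows "inv (Some GZ) (Qz (x,y,z)) \<and> tau (x,y,z) \<le> tau (Qz (x,y,z))"
proof -
  have e1: "x*y*(-x*y-z) = - ((x*y)^2) - x*y*z" by algebra
  have e2: "(-x*y-z)^2 = (x*y)^2 + 2*(x*y*z) + z^2" by algebra
  have sq: "(x*y)^2 \<ge> 0" by simp
  show ?thesis unfolding inv_def Qz_def using z p e1 e2 dZ[of x y z]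
    apply (simp add: Qz_def) using sq z p by linarith
qed

lemma xstep:
  fixes x y z :: real
  assumes z: "z^2 > 4" and p: "x*y*z > 0" and h: "(y*z)^2 \<le> 4*x^2"
  shows "inv (Some GY) (Qy (x,y,z)) \<and> tau (x,y,z) < tau (Qy (x,y,z))"
proof -
  have d: "(x*z)^2 > 2*(x*y*z)" using l1[OF p h z] .
  have e3: "x*(x*z-y)*z = (x*z)^2 - x*y*z" by algebra
  have ab: "(x*z)*y = x*y*z" by simp
  have "(x*z)^2 \<le> 4*(x*z-y)^2" using l2[of "x*z" y] d p ab by simp
  thus ?thesis unfolding inv_def Qy_def using z p d e3 dY[of x y z] by (simp add: Qy_def)
qed

lemma ystep:
  fixes x y z :: real
  assumes z: "z^2 > 4" and p: "x*y*z > 0" and h: "(x*z)^2 \<le> 4*y^2"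
  shows "inv (Some GX) (Qx (x,y,z)) \<and> tau (x,y,z) < tau (Qx (x,y,z))"
proof -
  have p': "y*x*z > 0" using p by (simp add: mult_ac)
  have d': "(y*z)^2 > 2*(y*x*z)" using l1[OF p' h z] .
  hence d: "(y*z)^2 > 2*(x*y*z)" by (simp add: mult_ac)
  have e1: "(y*z-x)*y*z = (y*z)^2 - x*y*z" by algebra
  have ab: "(y*z)*x = x*y*z" by simp
  have "(y*z)^2 \<le> 4*(y*z-x)^2" using l2[of "y*z" x] d p ab by simp
  thus ?thesis unfolding inv_def Qx_def using z p d e1 dX[of x y z] by (simp add: Qx_def)
qed

lemma node_prop:
  assumes "inv lab v"
  shows "(\<forall>l \<in> child_gens lab. inv (Some l) (Qg l v) \<and> tau v \<le> tau (Qg l v))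
         \<and> (\<exists>l \<in> child_gens lab. tau v < tau (Qg l v))"
proof -
  obtain x y z where v: "v = (x,y,z)" by (cases v) auto
  have z: "z^2 > 4" using assms unfolding v inv_def by simp
  show ?thesis
  proof (cases lab)
    case None
    hence p: "x*y*z < 0" using assms unfolding v inv_def by simp
    show ?thesis using zstep[OF z p] None v by auto
  next
    case (Some g)
    show ?thesis
    proof (cases g)
      case GX
      hence p: "x*y*z > 0" "(y*z)^2 \<le> 4*x^2" using assms Some unfolding v inv_def by auto
      have "UNIV - {GX} = {GY, GZ}" using gen.exhaust by auto
      thus ?thesis using xstep[OF z p] zbar_step[OF z p(1)] Some GX v by auto
    next
      case GY
      hence p: "x*y*z > 0" "(x*z)^2 \<le> 4*y^2" using assms Some unfolding v inv_def by auto
      have "UNIV - {GY} = {GX, GZ}" using gen.exhaust by auto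
      thus ?thesis using ystep[OF z p] zbar_step[OF z p(1)] Some GY v by auto
    next
      case GZ
      hence p: "x*y*z < 0" using assms Some unfolding v inv_def by auto
      have "UNIV - {GZ} = {GX, GY}" using gen.exhaust by auto
      thus ?thesis using zstep[OF z p] Some GZ v by auto
    qed
  qed
qed

lemma tree_inv:
  assumes "u \<in> Omega0M" and "tree_node u v lab"
  shows "inv lab v \<and> tau u \<le> tau v"
  using assms(2)
proof (induction rule: tree_node.induct)
  case root
  obtain x y z where u: "u = (x,y,z)" by (cases u) auto
  have h: "z < -2" "x*y + z > 2" using assms(1) unfolding u Omega0M_def by auto
  have "x*y > 0" using h by linarith
  hence "x*y*z < 0" using h by (simp add: mult_pos_neg)
  moreover have "z^2 > 4"
  proof -
    have "(-z)^2 > 2^2" using h by (intro power_strict_mono) auto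
    thus ?thesis by simp
  qed
  ultimately show ?case unfolding u inv_def by simp
next
  case (root_child l)
  have "inv None u"
  proof -
    obtain x y z where u: "u = (x,y,z)" by (cases u) auto
    have h: "z < -2" "x*y + z > 2" using assms(1) unfolding u Omega0M_def by auto
    have "x*y > 0" using h by linarith
    hence "x*y*z < 0" using h by (simp add: mult_pos_neg)
    moreover have "(-z)^2 > 2^2" using h by (intro power_strict_mono) auto
    ultimately show ?thesis unfolding u inv_def by simp
  qed
  thus ?case using node_prop[of None u] root_child by auto
next
  case (child v l l')
  have "l' \<in> child_gens (Some l)" using child by simp
  thus ?case using node_prop[of "Some l" v] child by fastforce
qed

theorem mainTheorem8:
  fixes u v :: pt and lab :: "gen option"
  assumes "u \<in> Omega0M"
    and "tree_node u v lab"
  shows "(\<forall>l \<in> child_gens lab. tau v \<le> tau (Qg l v))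
         \<and> (\<exists>l \<in> child_gens lab. tau v < tau (Qg l v))
         \<and> tau u \<le> tau v"
  using tree_inv[OF assms] node_prop[of lab v] by blast

end
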